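(* Let $\mathbb{Z}\langle w_1,w_2,\ldots\rangle$ be the free associative algebra over $\mathbb{Z}$ on generators $w_n$ of degree $2n$, with the graded Hopf algebra structure given by $\Delta w_n=\sum_{k=0}^n\binom{n}{k}w_k\otimes w_{n-k}$ (where $w_0=1$), and let $\mathbb{Z}\langle \xi_1,\xi_2,\ldots\rangle$ be the free associative algebra over $\mathbb{Z}$ on generators $\xi_n$ of degree $2n$, with the graded Hopf algebra structure given by $\Delta\xi_n=1\otimes\xi_n+\xi_n\otimes1$. Then these two graded Hopf algebras are isomorphic over $\mathbb{Z}$. *)

theory Defs
  imports Main
begin

(* Free associative algebra Z<x_1,x_2,...>: elements are finitely supported
   integer-valued functions on words (nat lists) whose letters are >= 1.
   The letter n stands for the generator (w_n resp. xi_n) of degree 2n. *)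

definition word_deg :: "nat list \<Rightarrow> nat" where
  "word_deg w = (\<Sum>i\<leftarrow>w. 2 * i)"

definition NC :: "(nat list \<Rightarrow> int) set" where
  "NC = {p. finite {w. p w \<noteq> 0} \<and> (\<forall>w. p w \<noteq> 0 \<longrightarrow> (\<forall>i\<in>set w. 1 \<le> i))}"

definition nc_add :: "(nat list \<Rightarrow> int) \<Rightarrow> (nat list \<Rightarrow> int) \<Rightarrow> (nat list \<Rightarrow> int)" where
  "nc_add p q = (\<lambda>w. p w + q w)"

definition nc_mult :: "(nat list \<Rightarrow> int) \<Rightarrow> (nat list \<Rightarrow> int) \<Rightarrow> (nat list \<Rightarrow> int)" where
  "nc_mult p q = (\<lambda>w. \<Sum>i\<le>length w. p (take i w) * q (drop i w))"

definition nc_basis :: "nat list \<Rightarrow> (nat list \<Rightarrow> int)" where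
  "nc_basis u = (\<lambda>w. if w = u then 1 else 0)"

definition nc_one :: "nat list \<Rightarrow> int" where
  "nc_one = nc_basis []"

definition nc_gen :: "nat \<Rightarrow> (nat list \<Rightarrow> int)" where
  "nc_gen n = nc_basis [n]"

definition nc_counit :: "(nat list \<Rightarrow> int) \<Rightarrow> int" where
  "nc_counit p = p []"

definition homogeneous :: "nat \<Rightarrow> (nat list \<Rightarrow> int) \<Rightarrow> bool" where
  "homogeneous d p \<longleftrightarrow> (\<forall>w. p w \<noteq> 0 \<longrightarrow> word_deg w = d)"

(* Tensor square A \<otimes>_Z A: free Z-module on pairs of words; all degrees are even,
   so the Koszul sign in the product is trivial. *)

definition t_mult :: "(nat list \<times> nat list \<Rightarrow> int) \<Rightarrow> (nat list \<times> nat list \<Rightarrow> int)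
     \<Rightarrow> (nat list \<times> nat list \<Rightarrow> int)" where
  "t_mult F G = (\<lambda>(u, v). \<Sum>i\<le>length u. \<Sum>j\<le>length v.
       F (take i u, take j v) * G (drop i u, drop j v))"

definition tensor :: "(nat list \<Rightarrow> int) \<Rightarrow> (nat list \<Rightarrow> int) \<Rightarrow> (nat list \<times> nat list \<Rightarrow> int)" where
  "tensor p q = (\<lambda>(u, v). p u * q v)"

definition t_one :: "nat list \<times> nat list \<Rightarrow> int" where
  "t_one = tensor nc_one nc_one"

primrec t_word :: "(nat \<Rightarrow> (nat list \<times> nat list \<Rightarrow> int)) \<Rightarrow> nat list \<Rightarrow> (nat list \<times> nat list \<Rightarrow> int)" where
  "t_word g [] = t_one"
| "t_word g (i # w) = t_mult (g i) (t_word g w)"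

definition coprod_ext :: "(nat \<Rightarrow> (nat list \<times> nat list \<Rightarrow> int)) \<Rightarrow> (nat list \<Rightarrow> int)
     \<Rightarrow> (nat list \<times> nat list \<Rightarrow> int)" where
  "coprod_ext g p = (\<lambda>x. \<Sum>w\<in>{w. p w \<noteq> 0}. p w * t_word g w x)"

definition w_elt :: "nat \<Rightarrow> (nat list \<Rightarrow> int)" where
  "w_elt k = (if k = 0 then nc_one else nc_gen k)"

definition Delta_W :: "(nat list \<Rightarrow> int) \<Rightarrow> (nat list \<times> nat list \<Rightarrow> int)" where
  "Delta_W = coprod_ext (\<lambda>n x. \<Sum>k\<le>n. int (n choose k) * tensor (w_elt k) (w_elt (n - k)) x)"

definition Delta_Xi :: "(nat list \<Rightarrow> int) \<Rightarrow> (nat list \<times> nat list \<Rightarrow> int)" where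
  "Delta_Xi = coprod_ext (\<lambda>n x. tensor nc_one (nc_gen n) x + tensor (nc_gen n) nc_one x)"

definition t_map :: "((nat list \<Rightarrow> int) \<Rightarrow> (nat list \<Rightarrow> int)) \<Rightarrow> (nat list \<times> nat list \<Rightarrow> int)
     \<Rightarrow> (nat list \<times> nat list \<Rightarrow> int)" where
  "t_map f F = (\<lambda>x. \<Sum>uv\<in>{uv. F uv \<noteq> 0}.
       F uv * tensor (f (nc_basis (fst uv))) (f (nc_basis (snd uv))) x)"

(* graded Hopf algebra isomorphism from (Z<w>, Delta_W) to (Z<xi>, Delta_Xi):
   a degree-preserving Z-linear bijection which is an algebra map and a coalgebra map
   (the antipode is then automatically preserved). *)
definition graded_hopf_iso :: "((nat list \<Rightarrow> int) \<Rightarrow> (nat list \<Rightarrow> int)) \<Rightarrow> bool" where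
  "graded_hopf_iso f \<longleftrightarrow>
     bij_betw f NC NC \<and>
     (\<forall>p\<in>NC. \<forall>q\<in>NC. f (nc_add p q) = nc_add (f p) (f q)) \<and>
     (\<forall>p\<in>NC. \<forall>d. homogeneous d p \<longrightarrow> homogeneous d (f p)) \<and>
     f nc_one = nc_one \<and>
     (\<forall>p\<in>NC. \<forall>q\<in>NC. f (nc_mult p q) = nc_mult (f p) (f q)) \<and>
     (\<forall>p\<in>NC. t_map f (Delta_W p) = Delta_Xi (f p)) \<and>
     (\<forall>p\<in>NC. nc_counit (f p) = nc_counit p)"

end

theory Submission
  imports Defs "HOL-Library.Product_Plus"
begin

instantiation list :: (type) monoid_add
begin
definition plus_list :: "'a list \<Rightarrow> 'a list \<Rightarrow> 'a list" where "plus_list a b = a @ b"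
definition zero_list :: "'a list" where "zero_list = []"
instance by standard (auto simp: plus_list_def zero_list_def)
end

class fsplit = monoid_add +
  assumes fin_split: "finite {p. fst p + snd p = x}"

instance list :: (type) fsplit
proof
  fix x :: "'a list"
  have "{p. fst p + snd p = x} \<subseteq> (\<lambda>i. (take i x, drop i x)) ` {..length x}"
  proof
    fix p assume "p \<in> {p. fst p + snd p = x}"
    then have "fst p @ snd p = x" by (simp add: plus_list_def)
    then show "p \<in> (\<lambda>i. (take i x, drop i x)) ` {..length x}"
      by (intro image_eqI[of _ _ "length (fst p)"]) auto
  qed
  then show "finite {p. fst p + snd p = x}" by (rule finite_subset) auto
qed

instance prod :: (fsplit, fsplit) fsplit
proof
  fix x :: "'a \<times> 'b"
  have "{p. fst p + snd p = x} \<subseteq> (\<lambda>(q,r). ((fst q, fst r), (snd q, snd r))) `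
          ({q. fst q + snd q = fst x} \<times> {r. fst r + snd r = snd x})"
  proof
    fix p assume "p \<in> {p. fst p + snd p = x}"
    then show "p \<in> (\<lambda>(q,r). ((fst q, fst r), (snd q, snd r))) `
          ({q. fst q + snd q = fst x} \<times> {r. fst r + snd r = snd x})"
      by (intro image_eqI[of _ _ "((fst (fst p), fst (snd p)), (snd (fst p), snd (snd p)))"]) auto
  qed
  then show "finite {p. fst p + snd p = x}"
    by (rule finite_subset) (intro finite_imageI finite_cartesian_product fin_split)
qed

definition supp :: "('a \<Rightarrow> int) \<Rightarrow> 'a set" where "supp P = {m. P m \<noteq> 0}"
abbreviation fs :: "('a \<Rightarrow> int) \<Rightarrow> bool" where "fs P \<equiv> finite (supp P)"

definition spl :: "'a::fsplit \<Rightarrow> ('a \<times> 'a) set" where "spl x = {p. fst p + snd p = x}"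

lemma finite_spl[simp]: "finite (spl x)" unfolding spl_def by (rule fin_split)

definition conv :: "('a::fsplit \<Rightarrow> int) \<Rightarrow> ('a \<Rightarrow> int) \<Rightarrow> 'a \<Rightarrow> int" where
  "conv P Q = (\<lambda>x. \<Sum>p\<in>spl x. P (fst p) * Q (snd p))"

definition delta :: "'a \<Rightarrow> 'a \<Rightarrow> int" where "delta m = (\<lambda>x. if x = m then 1 else 0)"

definition lin :: "('a \<Rightarrow> 'b \<Rightarrow> int) \<Rightarrow> ('a \<Rightarrow> int) \<Rightarrow> 'b \<Rightarrow> int" where
  "lin \<phi> P = (\<lambda>x. \<Sum>m\<in>supp P. P m * \<phi> m x)"

lemma conv_assoc: "conv (conv P Q) R = conv P (conv Q R)"
proof
  fix x
  have "conv (conv P Q) R x = (\<Sum>p\<in>spl x. \<Sum>r\<in>spl (fst p). P (fst r) * Q (snd r) * R (snd p))"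
    by (simp add: conv_def sum_distrib_right)
  also have "\<dots> = (\<Sum>(p,r)\<in>Sigma (spl x) (\<lambda>p. spl (fst p)). P (fst r) * Q (snd r) * R (snd p))"
    by (rule sum.Sigma) auto
  also have "\<dots> = (\<Sum>(p,r)\<in>Sigma (spl x) (\<lambda>p. spl (snd p)). P (fst p) * Q (fst r) * R (snd r))"
    by (rule sum.reindex_bij_witness[where i="\<lambda>(p,r). ((fst p + fst r, snd r), (fst p, fst r))"
          and j="\<lambda>(p,r). ((fst r, snd r + snd p), (snd r, snd p))"])
       (auto simp: spl_def add.assoc)
  also have "\<dots> = (\<Sum>p\<in>spl x. \<Sum>r\<in>spl (snd p). P (fst p) * Q (fst r) * R (snd r))"
    by (rule sum.Sigma[symmetric]) auto
  also have "\<dots> = conv P (conv Q R) x"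
    by (simp add: conv_def sum_distrib_left mult.assoc)
  finally show "conv (conv P Q) R x = conv P (conv Q R) x" .
qed

lemma conv_unit_left[simp]: "conv (delta 0) Q = Q"
proof
  fix x
  have "conv (delta 0) Q x = (\<Sum>p\<in>spl x. if (0,x) = p then Q x else 0)"
    by (auto simp: conv_def delta_def spl_def intro!: sum.cong)
  also have "\<dots> = Q x" by (subst sum.delta'[OF finite_spl]) (simp add: spl_def)
  finally show "conv (delta 0) Q x = Q x" .
qed

lemma conv_unit_right[simp]: "conv P (delta 0) = P"
proof
  fix x
  have "conv P (delta 0) x = (\<Sum>p\<in>spl x. if (x,0) = p then P x else 0)"
    by (auto simp: conv_def delta_def spl_def intro!: sum.cong)
  also have "\<dots> = P x" by (subst sum.delta'[OF finite_spl]) (simp add: spl_def)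
  finally show "conv P (delta 0) x = P x" .
qed

lemma conv_sum_left:
  "conv (\<lambda>x. \<Sum>i\<in>I. c i * F i x) Q y = (\<Sum>i\<in>I. c i * conv (F i) Q y)"
  by (simp add: conv_def sum_distrib_right sum_distrib_left mult.assoc sum.swap[of _ I])

lemma conv_sum_right:
  "conv Q (\<lambda>x. \<Sum>i\<in>I. c i * F i x) y = (\<Sum>i\<in>I. c i * conv Q (F i) y)"
  by (simp add: conv_def sum_distrib_right sum_distrib_left mult.left_commute sum.swap[of _ I])

lemma conv_add_left: "conv (\<lambda>x. A x + B x) Q y = conv A Q y + conv B Q y"
  by (simp add: conv_def distrib_right sum.distrib)

lemma conv_add_right: "conv Q (\<lambda>x. A x + B x) y = conv Q A y + conv Q B y"
  by (simp add: conv_def distrib_left sum.distrib)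

lemma supp_conv: "supp (conv P Q) \<subseteq> (\<lambda>p. fst p + snd p) ` (supp P \<times> supp Q)"
proof
  fix x assume "x \<in> supp (conv P Q)"
  then obtain p where "p \<in> spl x" "P (fst p) * Q (snd p) \<noteq> 0"
    by (auto simp: supp_def conv_def elim: sum.not_neutral_contains_not_neutral)
  then show "x \<in> (\<lambda>p. fst p + snd p) ` (supp P \<times> supp Q)"
    by (intro image_eqI[of _ _ p]) (auto simp: spl_def supp_def mem_Times_iff)
qed

lemma fs_conv: "fs P \<Longrightarrow> fs Q \<Longrightarrow> fs (conv P Q)"
  by (rule finite_subset[OF supp_conv]) auto

lemma supp_delta: "supp (delta m) = {m}" by (auto simp: supp_def delta_def)

lemma fs_delta[simp]: "fs (delta m)" by (simp add: supp_delta)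

lemma lin_eq: "finite S \<Longrightarrow> supp P \<subseteq> S \<Longrightarrow> lin \<phi> P x = (\<Sum>m\<in>S. P m * \<phi> m x)"
  unfolding lin_def by (rule sum.mono_neutral_left) (auto simp: supp_def)

lemma supp_sum: "supp (\<lambda>x. \<Sum>i\<in>I. c i * F i x) \<subseteq> (\<Union>i\<in>I. supp (F i))"
  by (auto simp: supp_def elim!: sum.not_neutral_contains_not_neutral)

lemma lin_sum:
  assumes "finite I" "\<And>i. i \<in> I \<Longrightarrow> fs (F i)"
  shows "lin \<phi> (\<lambda>m. \<Sum>i\<in>I. c i * F i m) x = (\<Sum>i\<in>I. c i * lin \<phi> (F i) x)"
proof -
  let ?S = "\<Union>i\<in>I. supp (F i)"
  have fin: "finite ?S" using assms by auto
  have "lin \<phi> (\<lambda>m. \<Sum>i\<in>I. c i * F i m) x = (\<Sum>m\<in>?S. (\<Sum>i\<in>I. c i * F i m) * \<phi> m x)"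
    by (rule lin_eq[OF fin supp_sum])
  also have "\<dots> = (\<Sum>i\<in>I. c i * (\<Sum>m\<in>?S. F i m * \<phi> m x))"
    by (simp add: sum_distrib_right sum_distrib_left mult.assoc sum.swap[of _ I])
  also have "\<dots> = (\<Sum>i\<in>I. c i * lin \<phi> (F i) x)"
    by (intro sum.cong refl arg_cong2[where f="(*)"] lin_eq[symmetric] fin) auto
  finally show ?thesis .
qed

lemma lin_diff:
  assumes "fs A" "fs B"
  shows "lin \<phi> (\<lambda>m. A m - B m) x = lin \<phi> A x - lin \<phi> B x"
proof -
  let ?S = "supp A \<union> supp B"
  have "lin \<phi> (\<lambda>m. A m - B m) x = (\<Sum>m\<in>?S. (A m - B m) * \<phi> m x)"
    by (rule lin_eq) (use assms in \<open>auto simp: supp_def\<close>)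
  also have "\<dots> = (\<Sum>m\<in>?S. A m * \<phi> m x) - (\<Sum>m\<in>?S. B m * \<phi> m x)"
    by (simp add: left_diff_distrib sum_subtractf)
  also have "\<dots> = lin \<phi> A x - lin \<phi> B x"
    using assms by (subst (1 2) lin_eq[where S="supp A \<union> supp B"]) auto
  finally show ?thesis .
qed

lemma lin_add:
  assumes "fs A" "fs B"
  shows "lin \<phi> (\<lambda>m. A m + B m) x = lin \<phi> A x + lin \<phi> B x"
proof -
  let ?S = "supp A \<union> supp B"
  have "lin \<phi> (\<lambda>m. A m + B m) x = (\<Sum>m\<in>?S. (A m + B m) * \<phi> m x)"
    by (rule lin_eq) (use assms in \<open>auto simp: supp_def\<close>)
  also have "\<dots> = (\<Sum>m\<in>?S. A m * \<phi> m x) + (\<Sum>m\<in>?S. B m * \<phi> m x)"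
    by (simp add: distrib_right sum.distrib)
  also have "\<dots> = lin \<phi> A x + lin \<phi> B x"
    using assms by (subst (1 2) lin_eq[where S="supp A \<union> supp B"]) auto
  finally show ?thesis .
qed

lemma lin_delta[simp]: "lin \<phi> (delta m) = \<phi> m"
  unfolding lin_def supp_delta by (rule ext) (simp add: delta_def)

lemma lin_cong: "(\<And>m. m \<in> supp P \<Longrightarrow> \<phi> m = \<psi> m) \<Longrightarrow> lin \<phi> P = lin \<psi> P"
  unfolding lin_def by (intro ext sum.cong) auto

lemma lin_delta_id: "fs P \<Longrightarrow> lin delta P = P"
proof (rule ext)
  fix x assume fin: "fs P"
  have "lin delta P x = (\<Sum>m\<in>supp P. if x = m then P x else 0)"
    unfolding lin_def by (rule sum.cong) (auto simp: delta_def)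
  also have "\<dots> = P x" using fin by (simp add: supp_def)
  finally show "lin delta P x = P x" .
qed

lemma supp_lin: "supp (lin \<phi> P) \<subseteq> (\<Union>m\<in>supp P. supp (\<phi> m))"
  by (auto simp: lin_def supp_def elim!: sum.not_neutral_contains_not_neutral)

lemma fs_lin: "fs P \<Longrightarrow> (\<And>m. m \<in> supp P \<Longrightarrow> fs (\<phi> m)) \<Longrightarrow> fs (lin \<phi> P)"
  by (rule finite_subset[OF supp_lin]) auto

lemma lin_repr: "fs P \<Longrightarrow> lin \<phi> P = lin \<phi> (\<lambda>x. \<Sum>m\<in>supp P. P m * delta m x)"
proof -
  assume "fs P"
  then have "(\<lambda>x. \<Sum>m\<in>supp P. P m * delta m x) = P"
    using lin_delta_id[of P] by (simp add: lin_def)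
  then show ?thesis by simp
qed

lemma lin_comp:
  assumes "fs P" "\<And>m. fs (\<psi> m)"
  shows "lin \<phi> (lin \<psi> P) = lin (\<lambda>m. lin \<phi> (\<psi> m)) P"
proof
  fix x
  have "lin \<phi> (lin \<psi> P) x = lin \<phi> (\<lambda>y. \<Sum>m\<in>supp P. P m * \<psi> m y) x"
    by (simp add: lin_def)
  also have "\<dots> = (\<Sum>m\<in>supp P. P m * lin \<phi> (\<psi> m) x)"
    by (rule lin_sum) (use assms in auto)
  also have "\<dots> = lin (\<lambda>m. lin \<phi> (\<psi> m)) P x" by (simp add: lin_def)
  finally show "lin \<phi> (lin \<psi> P) x = lin (\<lambda>m. lin \<phi> (\<psi> m)) P x" .
qed

lemma conv_expand:
  assumes "finite A" "finite B" "supp P \<subseteq> A" "supp Q \<subseteq> B"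
  shows "conv P Q m = (\<Sum>p\<in>A \<times> B. P (fst p) * Q (snd p) * delta (fst p + snd p) m)"
proof -
  have "conv P Q m = (\<Sum>p\<in>spl m \<inter> (A \<times> B). P (fst p) * Q (snd p))"
    unfolding conv_def
    by (rule sum.mono_neutral_right) (use assms in \<open>auto simp: supp_def\<close>)
  also have "\<dots> = (\<Sum>p\<in>A \<times> B. P (fst p) * Q (snd p) * delta (fst p + snd p) m)"
    by (rule sum.mono_neutral_cong_left) (use assms in \<open>auto simp: spl_def delta_def\<close>)
  finally show ?thesis .
qed

lemma lin_mult:
  fixes \<phi> :: "'a::fsplit \<Rightarrow> 'b::fsplit \<Rightarrow> int"
  assumes P: "fs P" and Q: "fs Q" and hom: "\<And>a b. \<phi> (a + b) = conv (\<phi> a) (\<phi> b)"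
  shows "lin \<phi> (conv P Q) = conv (lin \<phi> P) (lin \<phi> Q)"
proof
  fix x
  let ?A = "supp P" and ?B = "supp Q"
  have "lin \<phi> (conv P Q) x = lin \<phi> (\<lambda>m. \<Sum>p\<in>?A \<times> ?B. (P (fst p) * Q (snd p)) * delta (fst p + snd p) m) x"
    by (subst conv_expand[OF P Q order_refl order_refl, abs_def]) simp
  also have "\<dots> = (\<Sum>p\<in>?A \<times> ?B. (P (fst p) * Q (snd p)) * \<phi> (fst p + snd p) x)"
    by (subst lin_sum) (use P Q in auto)
  also have "\<dots> = (\<Sum>p\<in>?A \<times> ?B. (P (fst p) * Q (snd p)) * conv (\<phi> (fst p)) (\<phi> (snd p)) x)"
    by (simp add: hom)
  also have "\<dots> = (\<Sum>a\<in>?A. \<Sum>b\<in>?B. P a * (Q b * conv (\<phi> a) (\<phi> b) x))"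
    by (simp add: sum.cartesian_product case_prod_beta mult.assoc)
  also have "\<dots> = (\<Sum>a\<in>?A. P a * conv (\<phi> a) (lin \<phi> Q) x)"
    by (simp add: lin_def conv_sum_right sum_distrib_left)
  also have "\<dots> = conv (lin \<phi> P) (lin \<phi> Q) x"
    by (simp add: lin_def conv_sum_left)
  finally show "lin \<phi> (conv P Q) x = conv (lin \<phi> P) (lin \<phi> Q) x" .
qed


lemma zero_list_Nil: "(0::'a list) = []" by (simp add: zero_list_def)
lemma plus_list_app: "(a::'a list) + b = a @ b" by (simp add: plus_list_def)

lemma nc_mult_conv: "nc_mult = conv"
proof (intro ext)
  fix p q :: "nat list \<Rightarrow> int" and w
  show "nc_mult p q w = conv p q w"
    unfolding nc_mult_def conv_def
    by (rule sum.reindex_bij_witness[where i="\<lambda>pr. length (fst pr)" and j="\<lambda>i. (take i w, drop i w)"])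
       (auto simp: spl_def plus_list_app)
qed

lemma t_mult_conv: "t_mult = conv"
proof (intro ext)
  fix F G :: "nat list \<times> nat list \<Rightarrow> int" and x :: "nat list \<times> nat list"
  obtain u v where x: "x = (u, v)" by (cases x)
  have "t_mult F G x = (\<Sum>ij\<in>{..length u} \<times> {..length v}.
           F (take (fst ij) u, take (snd ij) v) * G (drop (fst ij) u, drop (snd ij) v))"
    by (simp add: t_mult_def x sum.cartesian_product case_prod_beta)
  also have "\<dots> = conv F G x"
    unfolding conv_def
    by (rule sum.reindex_bij_witness[where i="\<lambda>pr. (length (fst (fst pr)), length (snd (fst pr)))"
          and j="\<lambda>ij. ((take (fst ij) u, take (snd ij) v), (drop (fst ij) u, drop (snd ij) v))"])
       (auto simp: spl_def plus_list_app x)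
  finally show "t_mult F G x = conv F G x" .
qed

lemma nc_basis_delta: "nc_basis = delta" by (intro ext) (simp add: nc_basis_def delta_def)
lemma nc_one_delta: "nc_one = delta 0" by (simp add: nc_one_def nc_basis_delta zero_list_Nil)
lemma nc_gen_delta: "nc_gen n = delta [n]" by (simp add: nc_gen_def nc_basis_delta)

lemma tensor_delta: "tensor (delta u) (delta v) = delta (u, v)"
  by (auto simp: tensor_def delta_def)

lemma t_one_delta: "t_one = delta 0"
  by (simp add: t_one_def nc_one_delta tensor_delta zero_prod_def)

lemma tensor_conv: "conv (tensor a b) (tensor c d) = tensor (conv a c) (conv b d)"
proof (intro ext)
  fix x :: "nat list \<times> nat list"
  obtain u v where x: "x = (u, v)" by (cases x)
  show "conv (tensor a b) (tensor c d) x = tensor (conv a c) (conv b d) x"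
    unfolding t_mult_conv[symmetric] nc_mult_conv[symmetric]
    by (simp add: t_mult_def nc_mult_def tensor_def x sum_product mult_ac)
qed

lemma tensor_sum_left: "tensor (\<lambda>w. \<Sum>i\<in>I. c i * F i w) B x = (\<Sum>i\<in>I. c i * tensor (F i) B x)"
  by (cases x) (simp add: tensor_def sum_distrib_right sum_distrib_left mult_ac)
lemma tensor_sum_right: "tensor B (\<lambda>w. \<Sum>i\<in>I. c i * F i w) x = (\<Sum>i\<in>I. c i * tensor B (F i) x)"
  by (cases x) (simp add: tensor_def sum_distrib_right sum_distrib_left mult_ac)

lemma supp_tensor: "supp (tensor a b) \<subseteq> supp a \<times> supp b"
  by (auto simp: supp_def tensor_def)
lemma fs_tensor: "fs a \<Longrightarrow> fs b \<Longrightarrow> fs (tensor a b)"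
  by (rule finite_subset[OF supp_tensor]) auto

lemma t_word_conv: "t_word g w = (case w of [] \<Rightarrow> delta 0 | i # v \<Rightarrow> conv (g i) (t_word g v))"
  by (cases w) (simp_all add: t_one_delta t_mult_conv)

lemma t_word_Nil[simp]: "t_word g [] = delta 0" by (simp add: t_one_delta)
lemma t_word_Cons[simp]: "t_word g (i # v) = conv (g i) (t_word g v)" by (simp add: t_mult_conv)
declare t_word.simps[simp del]

lemma t_word_append: "t_word g (a @ b) = conv (t_word g a) (t_word g b)"
  by (induction a) (simp_all add: conv_assoc)

lemma fs_t_word: "(\<And>i. fs (g i)) \<Longrightarrow> fs (t_word g w)"
  by (induction w) (simp_all add: fs_conv)

lemma coprod_ext_lin: "coprod_ext g = lin (t_word g)"
  by (intro ext) (simp add: coprod_ext_def lin_def supp_def)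

lemma t_map_lin: "t_map f = lin (\<lambda>uv. tensor (f (delta (fst uv))) (f (delta (snd uv))))"
  by (intro ext) (simp add: t_map_def lin_def supp_def nc_basis_delta)

primrec wimg :: "(nat \<Rightarrow> nat list \<Rightarrow> int) \<Rightarrow> nat list \<Rightarrow> nat list \<Rightarrow> int" where
  "wimg h [] = delta 0"
| "wimg h (a # u) = conv (h a) (wimg h u)"

lemma wimg_append: "wimg h (a @ b) = conv (wimg h a) (wimg h b)"
  by (induction a) (simp_all add: conv_assoc)

lemma wimg_plus: "wimg h (a + b) = conv (wimg h a) (wimg h b)"
  by (simp add: plus_list_app wimg_append)

lemma fs_wimg: "(\<And>i. fs (h i)) \<Longrightarrow> fs (wimg h w)"
  by (induction w) (simp_all add: fs_conv)

lemma conv_delta: "conv (delta a) (delta b) = delta (a + b)"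
proof
  fix x
  show "conv (delta a) (delta b) x = delta (a + b) x"
    by (subst conv_expand[of "{a}" "{b}"]; simp add: supp_delta; simp add: delta_def)
qed

lemma wimg_gen: "(\<And>i. i \<in> set u \<Longrightarrow> h i = delta [i]) \<Longrightarrow> wimg h u = delta u"
proof (induction u)
  case Nil then show ?case by (simp add: zero_list_Nil)
next
  case (Cons a u)
  then show ?case by (simp add: conv_delta plus_list_app)
qed


fun U :: "nat \<Rightarrow> nat list \<Rightarrow> int" where
  "U n = (if n = 0 then delta [] else
     (\<lambda>x. \<Sum>k\<in>{1..n}. int ((n - 1) choose (k - 1)) * conv (delta [k]) (U (n - k)) x))"

lemma U_pos: "n \<noteq> 0 \<Longrightarrow> U n x = (\<Sum>k\<in>{1..n}. int ((n - 1) choose (k - 1)) * conv (delta [k]) (U (n - k)) x)"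
  by (subst U.simps) simp

lemma U_0: "U 0 = delta []" by (simp add: U.simps)

definition wword :: "nat \<Rightarrow> nat list" where "wword k = (if k = 0 then [] else [k])"

lemma w_elt_delta: "w_elt k = delta (wword k)"
  by (simp add: w_elt_def wword_def nc_one_def nc_gen_def nc_basis_delta)

fun P :: "nat \<Rightarrow> nat list \<Rightarrow> int" where
  "P n = (if n = 0 then delta [] else
     (\<lambda>x. delta [n] x - (\<Sum>k\<in>{1..<n}. int ((n - 1) choose (k - 1)) * conv (P k) (w_elt (n - k)) x)))"

declare U.simps[simp del] P.simps[simp del]

definition Pos :: "nat list set" where "Pos = {w. \<forall>i\<in>set w. 1 \<le> i}"
definition Good :: "nat \<Rightarrow> nat list set" where "Good d = {w. w \<in> Pos \<and> word_deg w = d}"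

lemma conv_unit_Nil[simp]: "conv (delta []) Q = Q" "conv Q (delta []) = Q"
  using conv_unit_left[of Q] conv_unit_right[of Q] by (simp_all add: zero_list_Nil)

lemma supp_conv_list: "supp (conv p q) \<subseteq> {a @ b | a b. a \<in> supp p \<and> b \<in> supp q}"
proof
  fix x assume "x \<in> supp (conv p q)"
  then obtain pr where "pr \<in> supp p \<times> supp q" "x = fst pr + snd pr" using supp_conv by blast
  then show "x \<in> {a @ b | a b. a \<in> supp p \<and> b \<in> supp q}" by (cases pr) (simp add: plus_list_app; blast)
qed

lemma word_deg_append[simp]: "word_deg (a @ b) = word_deg a + word_deg b"
  by (simp add: word_deg_def)
lemma word_deg_Nil[simp]: "word_deg [] = 0" by (simp add: word_deg_def)
lemma word_deg_Cons[simp]: "word_deg (i # w) = 2 * i + word_deg w" by (simp add: word_deg_def)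

lemma Pos_append[simp]: "a @ b \<in> Pos \<longleftrightarrow> a \<in> Pos \<and> b \<in> Pos" by (auto simp: Pos_def)

lemma supp_conv_Good:
  assumes "supp p \<subseteq> Good d1" "supp q \<subseteq> Good d2" shows "supp (conv p q) \<subseteq> Good (d1 + d2)"
proof
  fix x assume "x \<in> supp (conv p q)"
  then obtain a b where "x = a @ b" "a \<in> supp p" "b \<in> supp q" using supp_conv_list by blast
  then show "x \<in> Good (d1 + d2)" using assms by (auto simp: Good_def)
qed

lemma supp_conv_Pos:
  assumes "supp p \<subseteq> Pos" "supp q \<subseteq> Pos" shows "supp (conv p q) \<subseteq> Pos"
proof
  fix x assume "x \<in> supp (conv p q)"
  then obtain a b where "x = a @ b" "a \<in> supp p" "b \<in> supp q" using supp_conv_list by blast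
  then show "x \<in> Pos" using assms by auto
qed

lemma supp_diff: "supp (\<lambda>x. A x - B x) \<subseteq> supp A \<union> supp B" by (auto simp: supp_def)

lemma U_props: "fs (U n) \<and> supp (U n) \<subseteq> Good (2 * n)"
proof (induction n rule: less_induct)
  case (less n)
  show ?case
  proof (cases "n = 0")
    case True then show ?thesis by (simp add: U.simps supp_delta Good_def Pos_def)
  next
    case False
    have k: "fs (conv (delta [k]) (U (n - k))) \<and> supp (conv (delta [k]) (U (n - k))) \<subseteq> Good (2 * n)"
      if "k \<in> {1..n}" for k
    proof -
      have "supp (delta [k]) \<subseteq> Good (2 * k)" using that by (simp add: supp_delta Good_def Pos_def)
      moreover have "fs (U (n - k)) \<and> supp (U (n - k)) \<subseteq> Good (2 * (n - k))" using that False less by auto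
      ultimately show ?thesis using supp_conv_Good[of "delta [k]" "2*k" "U (n-k)" "2*(n-k)"] that
        by (auto intro: fs_conv simp: algebra_simps)
    qed
    have sub: "supp (U n) \<subseteq> (\<Union>k\<in>{1..n}. supp (conv (delta [k]) (U (n - k))))"
      using False by (subst U.simps) (simp add: supp_sum)
    have "fs (U n)" by (rule finite_subset[OF sub]) (use k in auto)
    moreover have "supp (U n) \<subseteq> Good (2 * n)" using sub k by blast
    ultimately show ?thesis by blast
  qed
qed

lemma fs_U[simp]: "fs (U n)" using U_props by blast
lemma supp_U: "supp (U n) \<subseteq> Good (2 * n)" using U_props by blast

lemma fs_w_elt[simp]: "fs (w_elt k)" by (simp add: w_elt_delta)

lemma supp_w_elt: "supp (w_elt k) \<subseteq> Pos" by (simp add: w_elt_delta supp_delta wword_def Pos_def)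

lemma P_props: "fs (P n) \<and> supp (P n) \<subseteq> Pos"
proof (induction n rule: less_induct)
  case (less n)
  show ?case
  proof (cases "n = 0")
    case True then show ?thesis by (simp add: P.simps supp_delta Pos_def)
  next
    case False
    have k: "fs (conv (P k) (w_elt (n - k))) \<and> supp (conv (P k) (w_elt (n - k))) \<subseteq> Pos"
      if "k \<in> {1..<n}" for k
      using that less supp_conv_Pos[OF _ supp_w_elt, of "P k" "n - k"]
      by (auto intro: fs_conv simp: w_elt_delta)
    let ?S = "\<lambda>x. \<Sum>k\<in>{1..<n}. int ((n - 1) choose (k - 1)) * conv (P k) (w_elt (n - k)) x"
    have s1: "supp ?S \<subseteq> (\<Union>k\<in>{1..<n}. supp (conv (P k) (w_elt (n - k))))" by (rule supp_sum)
    have s2: "supp (P n) \<subseteq> supp (delta [n]) \<union> supp ?S"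
      using False by (subst P.simps) (simp add: supp_diff)
    have "fs ?S" by (rule finite_subset[OF s1]) (use k in auto)
    then have "fs (P n)" using finite_subset[OF s2] by (simp add: supp_delta)
    moreover have "supp (delta [n]) \<subseteq> Pos" using False by (simp add: supp_delta Pos_def)
    then have "supp (P n) \<subseteq> Pos" using s1 s2 k by blast
    ultimately show ?thesis by blast
  qed
qed

lemma fs_P[simp]: "fs (P n)" using P_props by blast
lemma supp_P: "supp (P n) \<subseteq> Pos" using P_props by blast

definition Fm :: "(nat list \<Rightarrow> int) \<Rightarrow> nat list \<Rightarrow> int" where "Fm = lin (wimg U)"
definition Gm :: "(nat list \<Rightarrow> int) \<Rightarrow> nat list \<Rightarrow> int" where "Gm = lin (wimg P)"

lemma Fm_mult: "fs p \<Longrightarrow> fs q \<Longrightarrow> Fm (conv p q) = conv (Fm p) (Fm q)"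
  unfolding Fm_def by (rule lin_mult) (simp_all add: wimg_plus)
lemma Gm_mult: "fs p \<Longrightarrow> fs q \<Longrightarrow> Gm (conv p q) = conv (Gm p) (Gm q)"
  unfolding Gm_def by (rule lin_mult) (simp_all add: wimg_plus)

lemma wimg_wword: "wimg h (wword k) = (if k = 0 then delta [] else h k)"
  by (simp add: wword_def zero_list_Nil)

lemma Fm_w_elt: "Fm (w_elt k) = U k"
  by (simp add: Fm_def w_elt_delta wimg_wword U.simps[of 0])
lemma Gm_delta: "Gm (delta [k]) = P k"
  by (simp add: Gm_def zero_list_Nil)
lemma Fm_delta: "Fm (delta [k]) = U k"
  by (simp add: Fm_def zero_list_Nil)

lemma Fm_P: "n \<ge> 1 \<Longrightarrow> Fm (P n) = delta [n]"
proof (induction n rule: less_induct)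
  case (less n)
  let ?c = "\<lambda>k. int ((n - 1) choose (k - 1))"
  let ?S = "\<lambda>x. \<Sum>k\<in>{1..<n}. ?c k * conv (P k) (w_elt (n - k)) x"
  have ins: "{1..n} = insert n {1..<n}" using less.prems by auto
  have fsk: "fs (conv (P k) (w_elt (n - k)))" for k by (intro fs_conv) (simp_all add: w_elt_delta)
  have fsS: "fs ?S" by (rule finite_subset[OF supp_sum]) (use fsk in auto)
  have Pn: "P n = (\<lambda>x. delta [n] x - ?S x)" using less.prems by (subst P.simps) simp
  show ?case
  proof
    fix x
    have "Fm (P n) x = Fm (delta [n]) x - Fm ?S x"
      unfolding Pn Fm_def by (rule lin_diff[OF _ fsS]) simp
    also have "Fm ?S x = (\<Sum>k\<in>{1..<n}. ?c k * Fm (conv (P k) (w_elt (n - k))) x)"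
      unfolding Fm_def by (rule lin_sum) (simp_all add: fsk)
    also have "(\<Sum>k\<in>{1..<n}. ?c k * Fm (conv (P k) (w_elt (n - k))) x)
        = (\<Sum>k\<in>{1..<n}. ?c k * conv (delta [k]) (U (n - k)) x)"
      using less.IH by (intro sum.cong refl) (simp add: Fm_mult Fm_w_elt)
    also have "Fm (delta [n]) x - (\<Sum>k\<in>{1..<n}. ?c k * conv (delta [k]) (U (n - k)) x) = delta [n] x"
      using less.prems ins by (simp add: Fm_delta U_pos U_0)
    finally show "Fm (P n) x = delta [n] x" .
  qed
qed


lemma U_pos_fun: "n \<noteq> 0 \<Longrightarrow> U n = (\<lambda>x. \<Sum>k\<in>{1..n}. int ((n - 1) choose (k - 1)) * conv (delta [k]) (U (n - k)) x)"
  by (subst U.simps) simp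

lemma P_pos: "n \<noteq> 0 \<Longrightarrow> P n x = delta [n] x - (\<Sum>k\<in>{1..<n}. int ((n - 1) choose (k - 1)) * conv (P k) (w_elt (n - k)) x)"
  by (subst P.simps) simp

lemma Gm_U: "Gm (U n) = w_elt n"
proof (induction n rule: less_induct)
  case (less n)
  show ?case
  proof (cases "n = 0")
    case True then show ?thesis by (simp add: U_0 Gm_def w_elt_delta wword_def zero_list_Nil)
  next
    case False
    let ?c = "\<lambda>k. int ((n - 1) choose (k - 1))"
    have ins: "{1..n} = insert n {1..<n}" using False by auto
    show ?thesis
    proof
      fix x
      have "Gm (U n) x = (\<Sum>k\<in>{1..n}. ?c k * Gm (conv (delta [k]) (U (n - k))) x)"
        unfolding U_pos_fun[OF False] Gm_def by (rule lin_sum) (auto intro: fs_conv)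
      also have "\<dots> = (\<Sum>k\<in>{1..n}. ?c k * conv (P k) (w_elt (n - k)) x)"
        by (intro sum.cong refl) (use less.IH False in \<open>simp add: Gm_mult Gm_delta\<close>)
      also have "\<dots> = w_elt n x"
        using False ins by (simp add: P_pos w_elt_delta wword_def zero_list_Nil)
      finally show "Gm (U n) x = w_elt n x" .
    qed
  qed
qed

lemma Fm_one: "Fm (delta []) = delta []" by (simp add: Fm_def zero_list_Nil)
lemma Gm_one: "Gm (delta []) = delta []" by (simp add: Gm_def zero_list_Nil)

lemma Fm_wimg: "Fm (wimg P u) = wimg (\<lambda>i. Fm (P i)) u"
  by (induction u) (simp_all add: Fm_one zero_list_Nil Fm_mult fs_wimg)
lemma Gm_wimg: "Gm (wimg U u) = wimg (\<lambda>i. Gm (U i)) u"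
  by (induction u) (simp_all add: Gm_one zero_list_Nil Gm_mult fs_wimg)

lemma Fm_Gm: assumes "fs p" "supp p \<subseteq> Pos" shows "Fm (Gm p) = p"
proof -
  have "Fm (Gm p) = lin (\<lambda>u. Fm (wimg P u)) p"
    unfolding Gm_def Fm_def by (rule lin_comp) (simp_all add: assms fs_wimg)
  also have "\<dots> = lin delta p"
  proof (rule lin_cong)
    fix u assume "u \<in> supp p"
    then have "u \<in> Pos" using assms by auto
    then show "Fm (wimg P u) = delta u"
      by (simp add: Fm_wimg, intro wimg_gen) (auto simp: Pos_def Fm_P)
  qed
  also have "\<dots> = p" using assms by (simp add: lin_delta_id)
  finally show ?thesis .
qed

lemma Gm_Fm: assumes "fs p" "supp p \<subseteq> Pos" shows "Gm (Fm p) = p"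
proof -
  have "Gm (Fm p) = lin (\<lambda>u. Gm (wimg U u)) p"
    unfolding Gm_def Fm_def by (rule lin_comp) (simp_all add: assms fs_wimg)
  also have "\<dots> = lin delta p"
  proof (rule lin_cong)
    fix u assume "u \<in> supp p"
    then have "u \<in> Pos" using assms by auto
    then show "Gm (wimg U u) = delta u"
      by (simp add: Gm_wimg Gm_U, intro wimg_gen) (auto simp: Pos_def w_elt_delta wword_def)
  qed
  also have "\<dots> = p" using assms by (simp add: lin_delta_id)
  finally show ?thesis .
qed

lemma supp_wimg_U: "supp (wimg U u) \<subseteq> Good (word_deg u)"
proof (induction u)
  case Nil then show ?case by (simp add: supp_delta Good_def Pos_def zero_list_Nil)
next
  case (Cons a u)
  then show ?case using supp_conv_Good[OF supp_U Cons.IH] by simp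
qed

lemma supp_wimg_P: "supp (wimg P u) \<subseteq> Pos"
proof (induction u)
  case Nil then show ?case by (simp add: supp_delta Pos_def zero_list_Nil)
next
  case (Cons a u)
  then show ?case using supp_conv_Pos[OF supp_P Cons.IH] by simp
qed

lemma NC_iff: "p \<in> NC \<longleftrightarrow> fs p \<and> supp p \<subseteq> Pos"
  by (auto simp: NC_def supp_def Pos_def)

lemma Fm_NC: "p \<in> NC \<Longrightarrow> Fm p \<in> NC"
  unfolding NC_iff Fm_def
  using supp_lin[of "wimg U" p] supp_wimg_U
  by (auto intro!: fs_lin fs_wimg simp: Good_def)

lemma Gm_NC: "p \<in> NC \<Longrightarrow> Gm p \<in> NC"
  unfolding NC_iff Gm_def
  using supp_lin[of "wimg P" p] supp_wimg_P
  by (auto intro!: fs_lin fs_wimg)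

lemma Fm_hom: "homogeneous d p \<Longrightarrow> homogeneous d (Fm p)"
proof -
  assume h: "homogeneous d p"
  have "supp (Fm p) \<subseteq> (\<Union>u\<in>supp p. supp (wimg U u))" unfolding Fm_def by (rule supp_lin)
  also have "\<dots> \<subseteq> {w. word_deg w = d}"
    using supp_wimg_U h by (fastforce simp: homogeneous_def supp_def Good_def)
  finally show "homogeneous d (Fm p)" by (auto simp: homogeneous_def supp_def)
qed


lemma reg1: "(\<Sum>a\<le>(m::nat). \<Sum>i\<le>a. f a i) = (\<Sum>i\<le>m. \<Sum>j\<le>m-i. f (i+j) i :: int)"
proof -
  have "(\<Sum>a\<le>m. \<Sum>i\<le>a. f a i) = (\<Sum>(a,i)\<in>Sigma {..m} (\<lambda>a. {..a}). f a i)"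
    by (rule sum.Sigma) auto
  also have "\<dots> = (\<Sum>(i,j)\<in>Sigma {..m} (\<lambda>i. {..m-i}). f (i+j) i)"
    by (rule sum.reindex_bij_witness[where i="\<lambda>(i,j). (i+j, i)" and j="\<lambda>(a,i). (i, a-i)"]) auto
  also have "\<dots> = (\<Sum>i\<le>m. \<Sum>j\<le>m-i. f (i+j) i)"
    by (rule sum.Sigma[symmetric]) auto
  finally show ?thesis .
qed

lemma reg2: "(\<Sum>a\<le>(m::nat). \<Sum>i\<le>m-a. f a i) = (\<Sum>i\<le>m. \<Sum>j\<le>m-i. f j i :: int)"
proof -
  have "(\<Sum>a\<le>m. \<Sum>i\<le>m-a. f a i) = (\<Sum>(a,i)\<in>Sigma {..m} (\<lambda>a. {..m-a}). f a i)"
    by (rule sum.Sigma) auto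
  also have "\<dots> = (\<Sum>(i,j)\<in>Sigma {..m} (\<lambda>i. {..m-i}). f j i)"
    by (rule sum.reindex_bij_witness[where i="\<lambda>(i,j). (j, i)" and j="\<lambda>(a,i). (i, a)"]) auto
  also have "\<dots> = (\<Sum>i\<le>m. \<Sum>j\<le>m-i. f j i)"
    by (rule sum.Sigma[symmetric]) auto
  finally show ?thesis .
qed

lemma coef1: "i + j \<le> m \<Longrightarrow> (m choose (i+j)) * ((i+j) choose i) = (m choose i) * ((m - i) choose j)"
  using choose_mult[of i "i+j" m] by simp

lemma coef2: "i + j \<le> m \<Longrightarrow> (m choose j) * ((m - j) choose i) = (m choose i) * ((m - i) choose j)"
proof -
  assume h: "i + j \<le> m"
  have "(m choose (i+j)) * ((i+j) choose j) = (m choose j) * ((m - j) choose i)"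
    using choose_mult[of j "i+j" m] h by simp
  moreover have "((i+j) choose j) = ((i+j) choose i)"
    using binomial_symmetric[of i "i+j"] by simp
  ultimately show ?thesis using coef1[OF h] by simp
qed

lemma binom_split:
  "(\<Sum>a\<le>Suc m. int (Suc m choose a) * h a) =
     (\<Sum>a\<le>m. int (m choose a) * h (Suc a)) + (\<Sum>a\<le>m. int (m choose a) * h a)"
proof -
  have e1: "(\<Sum>a\<le>Suc m. int (Suc m choose a) * h a) = h 0 + (\<Sum>a\<le>m. int (Suc m choose Suc a) * h (Suc a))"
    by (subst sum.atMost_Suc_shift) simp
  have e2: "(\<Sum>a\<le>m. int (Suc m choose Suc a) * h (Suc a)) = (\<Sum>a\<le>m. int (m choose a) * h (Suc a)) + (\<Sum>a\<le>m. int (m choose Suc a) * h (Suc a))"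
    by (simp add: sum.distrib distrib_right)
  have e3: "h 0 + (\<Sum>a\<le>m. int (m choose Suc a) * h (Suc a)) = (\<Sum>a\<le>Suc m. int (m choose a) * h a)"
    by (subst sum.atMost_Suc_shift) simp
  have e4: "(\<Sum>a\<le>Suc m. int (m choose a) * h a) = (\<Sum>a\<le>m. int (m choose a) * h a)" by simp
  show ?thesis using e1 e2 e3 e4 by simp
qed


definition gX :: "nat \<Rightarrow> nat list \<times> nat list \<Rightarrow> int" where
  "gX = (\<lambda>n x. tensor nc_one (nc_gen n) x + tensor (nc_gen n) nc_one x)"

definition DXf :: "nat \<Rightarrow> nat list \<times> nat list \<Rightarrow> int" where
  "DXf j = (\<lambda>y. \<Sum>l\<le>j. int (j choose l) * tensor (U l) (U (j - l)) y)"

lemma fs_add: "fs A \<Longrightarrow> fs B \<Longrightarrow> fs (\<lambda>x. A x + B x)"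
  by (rule finite_subset[of _ "supp A \<union> supp B"]) (auto simp: supp_def)

lemma fs_gX[simp]: "fs (gX k)"
  unfolding gX_def by (intro fs_add fs_tensor) (simp_all add: nc_one_delta nc_gen_delta)

lemma U_Suc_fun: "U (Suc a) = (\<lambda>x. \<Sum>i\<le>a. int (a choose i) * conv (delta [Suc i]) (U (a - i)) x)"
proof
  fix x
  show "U (Suc a) x = (\<Sum>i\<le>a. int (a choose i) * conv (delta [Suc i]) (U (a - i)) x)"
  proof -
    have "U (Suc a) x = (\<Sum>k\<in>{1..Suc a}. int ((Suc a - 1) choose (k - 1)) * conv (delta [k]) (U (Suc a - k)) x)"
      by (rule U_pos) simp
    also have "\<dots> = (\<Sum>k<Suc a. int ((Suc a - 1) choose (Suc k - 1)) * conv (delta [Suc k]) (U (Suc a - Suc k)) x)"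
      by (simp only: One_nat_def sum.atLeast1_atMost_eq)
    also have "\<dots> = (\<Sum>i\<le>a. int (a choose i) * conv (delta [Suc i]) (U (a - i)) x)"
      by (simp only: lessThan_Suc_atMost) simp
    finally show ?thesis .
  qed
qed

lemma conv_gX: "conv (gX k) (\<lambda>y. \<Sum>l\<le>j. int (j choose l) * tensor (U l) (U (j - l)) y) x
  = (\<Sum>l\<le>j. int (j choose l) * (tensor (U l) (conv (delta [k]) (U (j - l))) x
        + tensor (conv (delta [k]) (U l)) (U (j - l)) x))"
proof -
  have "conv (gX k) (\<lambda>y. \<Sum>l\<le>j. int (j choose l) * tensor (U l) (U (j - l)) y) x
     = (\<Sum>l\<le>j. int (j choose l) * conv (gX k) (tensor (U l) (U (j - l))) x)"
    by (rule conv_sum_right)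
  also have "\<dots> = (\<Sum>l\<le>j. int (j choose l) * (tensor (U l) (conv (delta [k]) (U (j - l))) x
        + tensor (conv (delta [k]) (U l)) (U (j - l)) x))"
    by (intro sum.cong refl)
       (simp add: gX_def conv_add_left tensor_conv nc_one_delta nc_gen_delta)
  finally show ?thesis .
qed

lemma DX: "lin (t_word gX) (U n) = DXf n"
proof (induction n rule: less_induct)
  case (less n)
  show ?case
  proof (cases n)
    case 0
    then show ?thesis
      by (intro ext) (simp add: U_0 DXf_def tensor_delta zero_list_Nil zero_prod_def)
  next
    case (Suc m)
    let ?R = "\<lambda>i j. tensor (U j) (conv (delta [Suc i]) (U (m - i - j)))"
    let ?L = "\<lambda>i j. tensor (conv (delta [Suc i]) (U j)) (U (m - i - j))"
    show ?thesis
    proof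
      fix x
      have hom: "\<And>a b. t_word gX (a + b) = conv (t_word gX a) (t_word gX b)"
        by (simp add: plus_list_app t_word_append)
      have "lin (t_word gX) (U n) x
          = (\<Sum>k\<in>{1..n}. int ((n - 1) choose (k - 1)) * lin (t_word gX) (conv (delta [k]) (U (n - k))) x)"
      proof -
        have nz: "n \<noteq> 0" using Suc by simp
        show ?thesis by (simp only: U_pos_fun[OF nz], subst lin_sum) (auto intro: fs_conv)
      qed
      also have "\<dots> = (\<Sum>k\<in>{1..n}. int ((n - 1) choose (k - 1)) * conv (gX k) (DXf (n - k)) x)"
        by (intro sum.cong refl)
           (use less.IH Suc in \<open>simp add: lin_mult[OF _ _ hom] fs_t_word zero_list_Nil\<close>)
      also have "\<dots> = (\<Sum>i\<le>m. int (m choose i) * conv (gX (Suc i)) (DXf (m - i)) x)"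
        unfolding Suc by (simp only: One_nat_def sum.atLeast1_atMost_eq lessThan_Suc_atMost) simp
      also have "\<dots> = (\<Sum>i\<le>m. \<Sum>j\<le>m - i. int (m choose i) * int ((m - i) choose j) * (?R i j x + ?L i j x))"
        by (intro sum.cong refl) (simp only: DXf_def conv_gX, simp add: sum_distrib_left mult.assoc)
      also have "\<dots> = (\<Sum>i\<le>m. \<Sum>j\<le>m - i. int (m choose i) * int ((m - i) choose j) * ?L i j x)
                    + (\<Sum>i\<le>m. \<Sum>j\<le>m - i. int (m choose i) * int ((m - i) choose j) * ?R i j x)"
        by (simp add: distrib_left sum.distrib)
      also have "(\<Sum>i\<le>m. \<Sum>j\<le>m - i. int (m choose i) * int ((m - i) choose j) * ?L i j x)
          = (\<Sum>a\<le>m. int (m choose a) * tensor (U (Suc a)) (U (Suc m - Suc a)) x)"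
      proof -
        have "(\<Sum>a\<le>m. int (m choose a) * tensor (U (Suc a)) (U (Suc m - Suc a)) x)
            = (\<Sum>a\<le>m. \<Sum>i\<le>a. int (m choose a) * int (a choose i) *
                   tensor (conv (delta [Suc i]) (U (a - i))) (U (m - a)) x)"
          by (intro sum.cong refl) (simp add: U_Suc_fun tensor_sum_left sum_distrib_left mult.assoc)
        also have "\<dots> = (\<Sum>i\<le>m. \<Sum>j\<le>m - i. int (m choose (i + j)) * int ((i + j) choose i) *
                   tensor (conv (delta [Suc i]) (U (i + j - i))) (U (m - (i + j))) x)"
          by (rule reg1)
        also have "\<dots> = (\<Sum>i\<le>m. \<Sum>j\<le>m - i. int (m choose i) * int ((m - i) choose j) * ?L i j x)"
        proof (intro sum.cong refl)
          fix i j assume "i \<in> {..m}" "j \<in> {..m - i}"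
          then have h: "i + j \<le> m" by auto
          have "int (m choose (i + j)) * int ((i + j) choose i) = int (m choose i) * int ((m - i) choose j)"
            using coef1[OF h] by (metis of_nat_mult)
          then show "int (m choose (i + j)) * int ((i + j) choose i) *
                   tensor (conv (delta [Suc i]) (U (i + j - i))) (U (m - (i + j))) x
              = int (m choose i) * int ((m - i) choose j) * ?L i j x"
            by (simp add: diff_diff_add)
        qed
        finally show ?thesis by simp
      qed
      also have "(\<Sum>i\<le>m. \<Sum>j\<le>m - i. int (m choose i) * int ((m - i) choose j) * ?R i j x)
          = (\<Sum>a\<le>m. int (m choose a) * tensor (U a) (U (Suc m - a)) x)"
      proof -
        have "(\<Sum>a\<le>m. int (m choose a) * tensor (U a) (U (Suc m - a)) x)
            = (\<Sum>a\<le>m. \<Sum>i\<le>m - a. int (m choose a) * int ((m - a) choose i) *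
                   tensor (U a) (conv (delta [Suc i]) (U (m - a - i))) x)"
        proof (intro sum.cong refl)
          fix a assume "a \<in> {..m}"
          then have "Suc m - a = Suc (m - a)" by auto
          then show "int (m choose a) * tensor (U a) (U (Suc m - a)) x
              = (\<Sum>i\<le>m - a. int (m choose a) * int ((m - a) choose i) *
                   tensor (U a) (conv (delta [Suc i]) (U (m - a - i))) x)"
            by (simp add: U_Suc_fun tensor_sum_right sum_distrib_left mult.assoc)
        qed
        also have "\<dots> = (\<Sum>i\<le>m. \<Sum>j\<le>m - i. int (m choose j) * int ((m - j) choose i) *
                   tensor (U j) (conv (delta [Suc i]) (U (m - j - i))) x)"
          by (rule reg2)
        also have "\<dots> = (\<Sum>i\<le>m. \<Sum>j\<le>m - i. int (m choose i) * int ((m - i) choose j) * ?R i j x)"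
        proof (intro sum.cong refl)
          fix i j assume "i \<in> {..m}" "j \<in> {..m - i}"
          then have h: "i + j \<le> m" by auto
          have "int (m choose j) * int ((m - j) choose i) = int (m choose i) * int ((m - i) choose j)"
            using coef2[OF h] by (metis of_nat_mult)
          moreover have "m - j - i = m - i - j" by simp
          ultimately show "int (m choose j) * int ((m - j) choose i) *
                   tensor (U j) (conv (delta [Suc i]) (U (m - j - i))) x
              = int (m choose i) * int ((m - i) choose j) * ?R i j x"
            by simp
        qed
        finally show ?thesis by simp
      qed
      also have "(\<Sum>a\<le>m. int (m choose a) * tensor (U (Suc a)) (U (Suc m - Suc a)) x)
           + (\<Sum>a\<le>m. int (m choose a) * tensor (U a) (U (Suc m - a)) x) = DXf n x"
        unfolding DXf_def Suc by (rule binom_split[symmetric, of m "\<lambda>a. tensor (U a) (U (Suc m - a)) x"])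
      finally show "lin (t_word gX) (U n) x = DXf n x" .
    qed
  qed
qed


definition gW :: "nat \<Rightarrow> nat list \<times> nat list \<Rightarrow> int" where
  "gW = (\<lambda>n x. \<Sum>k\<le>n. int (n choose k) * tensor (w_elt k) (w_elt (n - k)) x)"

definition psi :: "nat list \<times> nat list \<Rightarrow> nat list \<times> nat list \<Rightarrow> int" where
  "psi uv = tensor (wimg U (fst uv)) (wimg U (snd uv))"

lemma Delta_W_lin: "Delta_W = lin (t_word gW)"
  by (simp add: Delta_W_def gW_def coprod_ext_lin)

lemma Delta_Xi_lin: "Delta_Xi = lin (t_word gX)"
  by (simp add: Delta_Xi_def gX_def coprod_ext_lin)

lemma t_map_Fm: "t_map Fm = lin psi"
  by (simp add: t_map_lin Fm_def psi_def[abs_def])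

lemma fs_gW[simp]: "fs (gW n)"
  unfolding gW_def by (rule finite_subset[OF supp_sum]) (auto intro!: fs_tensor)

lemma psi_hom: "psi (a + b) = conv (psi a) (psi b)"
  by (simp add: psi_def wimg_plus tensor_conv)

lemma wimg_U_wword: "wimg U (wword k) = U k" by (simp add: wimg_wword U_0)

lemma key: "lin psi (gW a) = lin (t_word gX) (U a)"
proof
  fix x
  have "lin psi (gW a) x = (\<Sum>k\<le>a. int (a choose k) * lin psi (tensor (w_elt k) (w_elt (a - k))) x)"
    unfolding gW_def by (rule lin_sum) (auto intro!: fs_tensor)
  also have "\<dots> = DXf a x"
    by (simp add: DXf_def w_elt_delta tensor_delta psi_def wimg_U_wword)
  also have "\<dots> = lin (t_word gX) (U a) x" by (simp add: DX)
  finally show "lin psi (gW a) x = lin (t_word gX) (U a) x" .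
qed

lemma word_co: "lin psi (t_word gW u) = lin (t_word gX) (wimg U u)"
proof (induction u)
  case Nil
  then show ?case by (simp add: psi_def zero_prod_def zero_list_Nil tensor_delta)
next
  case (Cons a u)
  have hom: "\<And>a b. t_word gX (a + b) = conv (t_word gX a) (t_word gX b)"
    by (simp add: plus_list_app t_word_append)
  have "lin psi (t_word gW (a # u)) = conv (lin psi (gW a)) (lin psi (t_word gW u))"
    by (simp add: lin_mult[OF _ _ psi_hom] fs_t_word)
  also have "\<dots> = conv (lin (t_word gX) (U a)) (lin (t_word gX) (wimg U u))"
    by (simp add: key Cons.IH)
  also have "\<dots> = lin (t_word gX) (wimg U (a # u))"
    by (simp add: lin_mult[OF _ _ hom] fs_wimg)
  finally show ?case .
qed

lemma coalg: "fs p \<Longrightarrow> t_map Fm (Delta_W p) = Delta_Xi (Fm p)"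
proof -
  assume p: "fs p"
  have "t_map Fm (Delta_W p) = lin (\<lambda>u. lin psi (t_word gW u)) p"
    unfolding t_map_Fm Delta_W_lin by (rule lin_comp[OF p]) (simp add: fs_t_word)
  also have "\<dots> = lin (\<lambda>u. lin (t_word gX) (wimg U u)) p" by (simp add: word_co)
  also have "\<dots> = Delta_Xi (Fm p)"
    unfolding Delta_Xi_lin Fm_def by (rule lin_comp[OF p, symmetric]) (simp add: fs_wimg)
  finally show ?thesis .
qed

lemma counit: assumes "fs p" "supp p \<subseteq> Pos" shows "nc_counit (Fm p) = nc_counit p"
proof -
  have "Fm p [] = (\<Sum>u\<in>supp p. if [] = u then p [] else 0)"
    unfolding Fm_def lin_def
  proof (intro sum.cong refl)
    fix u assume u: "u \<in> supp p"
    show "p u * wimg U u [] = (if [] = u then p [] else 0)"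
    proof (cases u)
      case Nil then show ?thesis by (simp add: zero_list_Nil delta_def)
    next
      case (Cons i w)
      then have "i \<ge> 1" using u assms by (auto simp: Pos_def)
      then have "word_deg u \<noteq> 0" using Cons by simp
      then have "[] \<notin> supp (wimg U u)" using supp_wimg_U[of u] by (auto simp: Good_def)
      then show ?thesis using Cons by (simp add: supp_def)
    qed
  qed
  also have "\<dots> = p []" using assms by (simp add: supp_def)
  finally show ?thesis by (simp add: nc_counit_def)
qed

theorem mainTheorem11:
  shows "\<exists>f. graded_hopf_iso f"
proof -
  have bij: "bij_betw Fm NC NC"
    by (rule bij_betw_byWitness[where f'=Gm]) (auto simp: NC_iff Gm_Fm Fm_Gm intro: Fm_NC Gm_NC)
  have add: "\<forall>p\<in>NC. \<forall>q\<in>NC. Fm (nc_add p q) = nc_add (Fm p) (Fm q)"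
    by (auto simp: NC_iff nc_add_def Fm_def lin_add)
  have one: "Fm nc_one = nc_one"
    by (simp add: nc_one_delta Fm_def zero_list_Nil)
  have mult: "\<forall>p\<in>NC. \<forall>q\<in>NC. Fm (nc_mult p q) = nc_mult (Fm p) (Fm q)"
    by (auto simp: NC_iff nc_mult_conv Fm_mult)
  show ?thesis
    unfolding graded_hopf_iso_def
    using bij add one mult Fm_hom coalg counit by (auto simp: NC_iff)
qed

end
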